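(* Let $k\ge 3$, $K=\{1,\dots,k\}$, $T\subseteq K$ with $|T|=2$, and let $\bm v_1$ be a point of $PG(k-1,q)$ with $\mathrm{supp}(\bm v_1)\cap T=\emptyset$; set $\mathcal V=\{\bm v_1\}$ and $M=X^T\cup Y^T_{\mathcal V}\cup Z^T$. Let $C$ be the code over $\mathbb{F}_q$ with generator matrix $G$ whose columns are representing vectors of the points of $M$, one for each point. Then $C$ is an $[|M|,k]$ code with $d(C^\perp)=3$ and $\gamma(C)=k-1=k-d(C^\perp)+2$.
   Context: Points of $PG(k-1,q)$ are one-dimensional subspaces of $\mathbb{F}_q^k$, identified with any nonzero representing vector; the support $\mathrm{supp}(\bm x)=\{i:x_i\neq0\}$ of a point is well defined. $\bm e_i$ denotes the $i$-th standard unit vector of $\mathbb{F}_q^k$. Define $X^T=\{\bm x\in PG(k-1,q): \mathrm{supp}(\bm x)\cap T=\emptyset\}$; $Y^T_{\mathcal V}=\{\bm x\in PG(k-1,q): |\mathrm{supp}(\bm x)\cap T|=1\}$ minus all points represented by $\bm v_i+\lambda\bm e_j$ with $\bm v_i\in\mathcal V$, $j\in T$, $\lambda\in\mathbb{F}_q\setminus\{0\}$; $Z^T=\{\bm x\in PG(k-1,q): \mathrm{supp}(\bm x)\text{ is a 2-element subset of }T\}$. An $[n,k]$ code over $\mathbb{F}_q$ is a $k$-dimensional subspace $C\subseteq\mathbb{F}_q^n$; $E=\{1,\dots,n\}$; for $B\subseteq\mathbb{F}_q^n$, $\mathrm{Supp}(B)=\bigcup_{\bm x\in B}\mathrm{supp}(\bm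 x)$. $C^\perp$ is the dual code with respect to the standard inner product and $d(C^\perp)$ is the minimum weight (number of nonzero coordinates) of a nonzero codeword of $C^\perp$. The covering dimension is $\gamma(C)=\infty$ if $\mathrm{Supp}(C)\neq E$, and otherwise $\gamma(C)$ is the least positive integer $r$ such that $C$ has an $r$-dimensional subspace $D$ with $\mathrm{Supp}(D)=E$. *)

theory Defs
  imports Main "HOL-Library.Function_Algebras" "HOL-Library.Extended_Nat"
begin

text \<open>Vectors of F_q^m are functions nat => 'a vanishing outside the index set {1..m}.\<close>

definition fscale :: "'a::field \<Rightarrow> (nat \<Rightarrow> 'a) \<Rightarrow> (nat \<Rightarrow> 'a)" where
  "fscale c x = (\<lambda>i. c * x i)"

abbreviation fsubspace :: "(nat \<Rightarrow> 'a::field) set \<Rightarrow> bool" where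
  "fsubspace S \<equiv> module.subspace fscale S"

abbreviation fdim :: "(nat \<Rightarrow> 'a::field) set \<Rightarrow> nat" where
  "fdim S \<equiv> vector_space.dim fscale S"

definition vecs :: "nat \<Rightarrow> (nat \<Rightarrow> 'a::field) set" where
  "vecs m = {x. \<forall>i. i \<notin> {1..m} \<longrightarrow> x i = 0}"

definition supp :: "(nat \<Rightarrow> 'a::zero) \<Rightarrow> nat set" where
  "supp x = {i. x i \<noteq> 0}"

definition unitv :: "nat \<Rightarrow> nat \<Rightarrow> 'a::field" where
  "unitv j = (\<lambda>i. if i = j then 1 else 0)"

definition proj_point :: "(nat \<Rightarrow> 'a::field) \<Rightarrow> (nat \<Rightarrow> 'a) set" where
  "proj_point v = {fscale c v | c. c \<noteq> 0}"

definition PG :: "nat \<Rightarrow> (nat \<Rightarrow> 'a::field) set set" where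
  "PG k = {proj_point v | v. v \<in> vecs k \<and> v \<noteq> 0}"

text \<open>Support of a point (well defined, independent of the representative).\<close>
definition psupp :: "(nat \<Rightarrow> 'a::field) set \<Rightarrow> nat set" where
  "psupp P = supp (SOME v. v \<in> P)"

definition XT :: "nat \<Rightarrow> nat set \<Rightarrow> (nat \<Rightarrow> 'a::field) set set" where
  "XT k T = {P \<in> PG k. psupp P \<inter> T = {}}"

definition YT :: "nat \<Rightarrow> nat set \<Rightarrow> (nat \<Rightarrow> 'a::field) set set \<Rightarrow> (nat \<Rightarrow> 'a) set set" where
  "YT k T V = {P \<in> PG k. card (psupp P \<inter> T) = 1} -
     {proj_point (v + fscale c (unitv j)) | v j c. (\<exists>Q\<in>V. v \<in> Q) \<and> j \<in> T \<and> c \<noteq> 0}"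

definition ZT :: "nat \<Rightarrow> nat set \<Rightarrow> (nat \<Rightarrow> 'a::field) set set" where
  "ZT k T = {P \<in> PG k. psupp P \<subseteq> T \<and> card (psupp P) = 2}"

text \<open>Code generated by the k x n matrix whose j-th column is cols j.\<close>
definition gen_code :: "nat \<Rightarrow> nat \<Rightarrow> (nat \<Rightarrow> nat \<Rightarrow> 'a::field) \<Rightarrow> (nat \<Rightarrow> 'a) set" where
  "gen_code k n cols = {(\<lambda>j. if j \<in> {1..n} then (\<Sum>i\<in>{1..k}. u i * cols j i) else 0) | u. u \<in> vecs k}"

definition Supp :: "(nat \<Rightarrow> 'a::zero) set \<Rightarrow> nat set" where
  "Supp B = (\<Union>x\<in>B. supp x)"

definition dual_code :: "nat \<Rightarrow> (nat \<Rightarrow> 'a::field) set \<Rightarrow> (nat \<Rightarrow> 'a) set" where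
  "dual_code n C = {y \<in> vecs n. \<forall>x\<in>C. (\<Sum>i\<in>{1..n}. x i * y i) = 0}"

definition min_dist :: "(nat \<Rightarrow> 'a::zero) set \<Rightarrow> nat" where
  "min_dist C = Inf {card (supp x) | x. x \<in> C \<and> x \<noteq> 0}"

definition covdim :: "nat \<Rightarrow> (nat \<Rightarrow> 'a::field) set \<Rightarrow> enat" where
  "covdim n C = (if Supp C \<noteq> {1..n} then \<infinity>
     else enat (LEAST r. r > 0 \<and> (\<exists>D. fsubspace D \<and> D \<subseteq> C \<and> fdim D = r \<and> Supp D = {1..n})))"

end

theory Submission
  imports Defs
begin


lemma vs_fscale: "vector_space (fscale :: 'a::field \<Rightarrow> (nat \<Rightarrow> 'a) \<Rightarrow> _)"
  by unfold_locales (auto simp: fscale_def fun_eq_iff algebra_simps)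

interpretation vs: vector_space "fscale :: 'a::field \<Rightarrow> (nat \<Rightarrow> 'a) \<Rightarrow> _"
  by (rule vs_fscale)

lemma fsum_apply: "(\<Sum>v\<in>t. f v) (i::nat) = (\<Sum>v\<in>t. f v i)"
  by (induction t rule: infinite_finite_induct) auto

lemma fscale_apply[simp]: "fscale c x i = c * x i" by (simp add: fscale_def)

lemma diag_indep:
  fixes B :: "(nat \<Rightarrow> 'a::field) set"
  assumes "\<And>b. b \<in> B \<Longrightarrow> b (idx b) \<noteq> 0"
    and "\<And>b b'. b \<in> B \<Longrightarrow> b' \<in> B \<Longrightarrow> b' \<noteq> b \<Longrightarrow> b' (idx b) = 0"
  shows "vs.independent B"
  unfolding vs.independent_explicit_module
proof (intro allI impI)
  fix t u v assume t: "finite t" "t \<subseteq> B" and s: "(\<Sum>v\<in>t. fscale (u v) v) = 0" and v: "v \<in> t"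
  have "0 = (\<Sum>w\<in>t. fscale (u w) w) (idx v)" using s by simp
  also have "\<dots> = (\<Sum>w\<in>t. u w * w (idx v))" by (simp add: fsum_apply)
  also have "\<dots> = u v * v (idx v) + (\<Sum>w\<in>t-{v}. u w * w (idx v))"
    using t v by (simp add: sum.remove)
  also have "(\<Sum>w\<in>t-{v}. u w * w (idx v)) = 0"
    using t v assms(2) by (intro sum.neutral) auto
  finally show "u v = 0" using assms(1) t v by auto
qed

lemma supp_fscale[simp]: "c \<noteq> 0 \<Longrightarrow> supp (fscale c v) = supp v"
  by (auto simp: supp_def)

lemma fscale_fscale[simp]: "fscale c (fscale d v) = fscale (c*d) v"
  by (simp add: fscale_def fun_eq_iff mult.assoc)

lemma fscale_one[simp]: "fscale 1 v = v" by (simp add: fscale_def)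

lemma fscale_eq0_iff: "fscale c v = 0 \<longleftrightarrow> c = 0 \<or> v = 0"
  by (auto simp: fscale_def fun_eq_iff)

lemma pp_mem: "v \<in> proj_point v"
  unfolding proj_point_def by (intro CollectI exI[of _ 1]) auto

lemma pp_eq:
  assumes "p \<in> proj_point v" shows "proj_point p = proj_point v"
proof -
  obtain c where c: "c \<noteq> 0" "p = fscale c v" using assms by (auto simp: proj_point_def)
  show ?thesis
  proof (intro set_eqI iffI)
    fix x assume "x \<in> proj_point p"
    then obtain d where "d \<noteq> 0" "x = fscale d p" by (auto simp: proj_point_def)
    then show "x \<in> proj_point v" using c unfolding proj_point_def
      by (intro CollectI exI[of _ "d*c"]) auto
  next
    fix x assume "x \<in> proj_point v"
    then obtain d where d: "d \<noteq> 0" "x = fscale d v" by (auto simp: proj_point_def)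
    have "x = fscale (d / c) p" using c d by simp
    then show "x \<in> proj_point p" using c d unfolding proj_point_def
      by (intro CollectI exI[of _ "d/c"]) auto
  qed
qed

lemma pp_scale: "c \<noteq> 0 \<Longrightarrow> proj_point (fscale c v) = proj_point v"
  by (rule pp_eq) (auto simp: proj_point_def)

lemma psupp_pp: "psupp (proj_point v) = supp (v::nat \<Rightarrow> 'a::field)"
proof -
  have "(SOME x. x \<in> proj_point v) \<in> proj_point v" by (rule someI[of _ v]) (rule pp_mem)
  then obtain c where "c \<noteq> 0" "(SOME x. x \<in> proj_point v) = fscale c v"
    by (auto simp: proj_point_def)
  then show ?thesis by (simp add: psupp_def)
qed

lemma vecs_fscale: "v \<in> vecs k \<Longrightarrow> fscale c v \<in> vecs k"
  by (simp add: vecs_def)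

lemma PG_mem:
  assumes "P \<in> PG k" "p \<in> P"
  shows "p \<noteq> 0" "p \<in> vecs k" "P = proj_point p"
proof -
  obtain v where v: "P = proj_point v" "v \<in> vecs k" "v \<noteq> 0" using assms(1) by (auto simp: PG_def)
  then obtain c where c: "c \<noteq> 0" "p = fscale c v" using assms(2) by (auto simp: proj_point_def)
  show "p \<noteq> 0" using c v by (simp add: fscale_eq0_iff)
  show "p \<in> vecs k" using c v vecs_fscale by simp
  show "P = proj_point p" using v assms(2) pp_eq by metis
qed

lemma PG_intro: "v \<in> vecs k \<Longrightarrow> v \<noteq> 0 \<Longrightarrow> proj_point v \<in> PG k"
  by (auto simp: PG_def)

lemma pp_eqD: "proj_point p = proj_point v \<Longrightarrow> \<exists>c. c \<noteq> 0 \<and> p = fscale c v"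
  using pp_mem[of p] by (auto simp: proj_point_def)

definition dotk :: "nat \<Rightarrow> (nat \<Rightarrow> 'a::field) \<Rightarrow> (nat \<Rightarrow> 'a) \<Rightarrow> 'a" where
  "dotk k s x = (\<Sum>i\<in>{1..k}. s i * x i)"

definition indepP :: "(nat \<Rightarrow> 'a::field) set \<Rightarrow> bool" where
  "indepP F = (\<forall>c. (\<forall>i. (\<Sum>x\<in>F. c x * x i) = 0) \<longrightarrow> (\<forall>x\<in>F. c x = 0))"

lemma dotk_lin: "dotk k s (\<lambda>i. x i - t * y i) = dotk k s x - t * dotk k s y"
  by (simp add: dotk_def algebra_simps sum_subtractf sum_distrib_left)

lemma sum_single:
  assumes "finite A" "x0 \<in> A" "\<And>x. x \<in> A \<Longrightarrow> x \<noteq> x0 \<Longrightarrow> g x = 0"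
  shows "sum g A = g x0"
proof -
  have "sum g A = g x0 + sum g (A - {x0})" using assms by (simp add: sum.remove)
  also have "sum g (A - {x0}) = 0" using assms by (intro sum.neutral) auto
  finally show ?thesis by simp
qed

lemma sum_two:
  fixes h :: "'b \<Rightarrow> 'a::ring_1"
  assumes "finite A" "x \<in> A" "y \<in> A" "x \<noteq> y"
  shows "(\<Sum>z\<in>A. (if z = x then 1 else if z = y then -1 else 0) * h z) = h x - h y"
proof -
  have "(\<Sum>z\<in>A. (if z = x then 1 else if z = y then -1 else 0) * h z)
      = (\<Sum>z\<in>A. (if z = x then h z else 0) - (if z = y then h z else 0))"
    using assms by (intro sum.cong) auto
  also have "\<dots> = h x - h y" using assms by (simp add: sum_subtractf)
  finally show ?thesis .
qed

lemma indepP_subset: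
  assumes "indepP F" "G \<subseteq> F" "finite F" shows "indepP G"
  unfolding indepP_def
proof (intro allI impI ballI)
  fix c x assume h: "\<forall>i. (\<Sum>x\<in>G. c x * x i) = 0" and x: "x \<in> G"
  let ?c = "\<lambda>x. if x \<in> G then c x else 0"
  have "\<forall>i. (\<Sum>x\<in>F. ?c x * x i) = 0"
  proof
    fix i
    have "(\<Sum>x\<in>F. ?c x * x i) = (\<Sum>x\<in>F. if x \<in> G then c x * x i else 0)"
      by (intro sum.cong) auto
    also have "\<dots> = (\<Sum>x\<in>F \<inter> G. c x * x i)" using assms(3) by (simp add: sum.inter_restrict)
    also have "F \<inter> G = G" using assms(2) by auto
    finally show "(\<Sum>x\<in>F. ?c x * x i) = 0" using h by simp
  qed
  note hc = this
  have "?c x = 0" using assms(1)[unfolded indepP_def, THEN spec[of _ ?c], THEN mp, OF hc] x assms(2) by blast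
  then show "c x = 0" using x by simp
qed

lemma unitv_apply: "unitv j i = (if i = j then 1 else 0)" by (simp add: unitv_def)

lemma unitv_inj: "inj (unitv :: nat \<Rightarrow> nat \<Rightarrow> 'a::field)"
proof (rule injI)
  fix i j :: nat assume "(unitv i :: nat \<Rightarrow> 'a) = unitv j"
  then have "(unitv i :: nat \<Rightarrow> 'a) i = unitv j i" by simp
  then show "i = j" by (simp add: unitv_apply split: if_splits)
qed

lemma elim:
  fixes S :: "(nat \<Rightarrow> 'a::field) set"
  assumes "finite S" "card S \<le> k"
  shows "\<exists>F. finite F \<and> F \<subseteq> vecs k \<and> card F = k - card S \<and> indepP F \<and> (\<forall>x\<in>F. \<forall>s\<in>S. dotk k s x = 0)"
  using assms
proof (induction S rule: finite_induct)
  case empty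
  let ?F = "(unitv :: nat \<Rightarrow> nat \<Rightarrow> 'a) ` {1..k}"
  have "card ?F = k" by (simp add: card_image[OF inj_on_subset[OF unitv_inj subset_UNIV]])
  moreover have "?F \<subseteq> vecs k" by (auto simp: vecs_def unitv_apply)
  moreover have "indepP ?F"
    unfolding indepP_def
  proof (intro allI impI ballI)
    fix c x assume h: "\<forall>i. (\<Sum>x\<in>?F. c x * x i) = 0" and x: "x \<in> ?F"
    then obtain j where j: "x = unitv j" "j \<in> {1..k}" by auto
    have "(\<Sum>y\<in>?F. c y * y j) = c x * x j"
      using x j by (intro sum_single) (auto simp: unitv_apply split: if_splits)
    then show "c x = 0" using h j by (simp add: unitv_apply)
  qed
  ultimately show ?case by (intro exI[of _ ?F]) auto
next
  case (insert s S)
  then obtain F where F: "finite F" "F \<subseteq> vecs k" "card F = k - card S" "indepP F"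
    "\<forall>x\<in>F. \<forall>s\<in>S. dotk k s x = 0" by auto
  have cS: "card (insert s S) = Suc (card S)" using insert by simp
  then have "F \<noteq> {}" using F(3) insert.prems by auto
  show ?case
  proof (cases "\<forall>x\<in>F. dotk k s x = 0")
    case True
    obtain x0 where x0: "x0 \<in> F" using \<open>F \<noteq> {}\<close> by auto
    show ?thesis
      using F True x0 cS indepP_subset[OF F(4), of "F - {x0}"]
      by (intro exI[of _ "F - {x0}"]) auto
  next
    case False
    then obtain x0 where x0: "x0 \<in> F" "dotk k s x0 \<noteq> 0" by auto
    define t where "t x = dotk k s x / dotk k s x0" for x
    define g where "g x = (\<lambda>i. x i - t x * x0 i)" for x
    have core: "\<forall>x\<in>F-{x0}. c x = 0" if h: "\<forall>i. (\<Sum>x\<in>F-{x0}. c x * g x i) = 0" for c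
    proof -
      define d where "d x = (if x = x0 then - (\<Sum>y\<in>F-{x0}. c y * t y) else c x)" for x
      have "\<forall>i. (\<Sum>x\<in>F. d x * x i) = 0"
      proof
        fix i
        have "(\<Sum>x\<in>F. d x * x i) = d x0 * x0 i + (\<Sum>x\<in>F-{x0}. d x * x i)"
          using F(1) x0 by (simp add: sum.remove)
        also have "(\<Sum>x\<in>F-{x0}. d x * x i) = (\<Sum>x\<in>F-{x0}. c x * x i)"
          by (intro sum.cong) (auto simp: d_def)
        also have "(\<Sum>x\<in>F-{x0}. c x * g x i) = (\<Sum>x\<in>F-{x0}. c x * x i) - (\<Sum>y\<in>F-{x0}. c y * t y) * x0 i"
          by (simp add: g_def right_diff_distrib sum_subtractf sum_distrib_right mult.assoc)
        ultimately show "(\<Sum>x\<in>F. d x * x i) = 0" using h by (simp add: d_def algebra_simps)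
      qed
      then have "\<forall>x\<in>F. d x = 0" using F(4) unfolding indepP_def by blast
      then show ?thesis unfolding d_def by (metis DiffE singletonI)
    qed
    have inj: "inj_on g (F - {x0})"
    proof (rule inj_onI, rule ccontr)
      fix x y assume xy: "x \<in> F - {x0}" "y \<in> F - {x0}" "g x = g y" "x \<noteq> y"
      define c where "c z = (if z = x then 1 else if z = y then -1 else (0::'a))" for z
      have "\<forall>i. (\<Sum>z\<in>F-{x0}. c z * g z i) = 0"
      proof
        fix i show "(\<Sum>z\<in>F-{x0}. c z * g z i) = 0"
          unfolding c_def using sum_two[of "F-{x0}" x y "\<lambda>z. g z i"] xy F(1) by simp
      qed
      then have "c x = 0" using core xy by blast
      then show False by (simp add: c_def)
    qed
    let ?G = "g ` (F - {x0})"
    have "card ?G = k - card (insert s S)"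
      using inj F(1,3) x0 cS by (simp add: card_image)
    moreover have "?G \<subseteq> vecs k"
    proof
      fix y assume "y \<in> ?G"
      then obtain x where x: "x \<in> F" "y = g x" by auto
      have "x \<in> vecs k" "x0 \<in> vecs k" using F(2) x x0 by auto
      then show "y \<in> vecs k" unfolding x g_def vecs_def by auto
    qed
    moreover have "indepP ?G"
      unfolding indepP_def
    proof (intro allI impI ballI)
      fix c y assume h: "\<forall>i. (\<Sum>x\<in>?G. c x * x i) = 0" and y: "y \<in> ?G"
      have "\<forall>i. (\<Sum>x\<in>F-{x0}. c (g x) * g x i) = 0"
        using h by (simp add: sum.reindex[OF inj])
      then show "c y = 0" using core[of "c \<circ> g"] y by auto
    qed
    moreover have "\<forall>x\<in>?G. \<forall>s'\<in>insert s S. dotk k s' x = 0"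
    proof (intro ballI)
      fix y s' assume y: "y \<in> ?G" and s': "s' \<in> insert s S"
      then obtain x where x: "x \<in> F - {x0}" "y = g x" by auto
      have "dotk k s' y = dotk k s' x - t x * dotk k s' x0" unfolding x g_def by (rule dotk_lin)
      then show "dotk k s' y = 0" using s' F(5) x x0 by (auto simp: t_def)
    qed
    ultimately show ?thesis using F(1) by (intro exI[of _ ?G]) auto
  qed
qed



locale S18 =
  fixes k n :: nat and T :: "nat set"
    and v1 :: "(nat \<Rightarrow> 'a::{field,finite}) set"
    and M :: "(nat \<Rightarrow> 'a) set set"
    and enum :: "nat \<Rightarrow> (nat \<Rightarrow> 'a) set"
    and rep :: "(nat \<Rightarrow> 'a) set \<Rightarrow> (nat \<Rightarrow> 'a)"
  assumes k3: "k \<ge> 3"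
    and T: "T \<subseteq> {1..k}" "card T = 2"
    and v1: "v1 \<in> PG k" "psupp v1 \<inter> T = {}"
    and M: "M = XT k T \<union> YT k T {v1} \<union> ZT k T"
    and bij: "bij_betw enum {1..n} M"
    and rep: "\<forall>P\<in>M. rep P \<in> P"
begin

definition cols :: "nat \<Rightarrow> nat \<Rightarrow> 'a" where "cols j = rep (enum j)"
definition L :: "(nat \<Rightarrow> 'a) \<Rightarrow> nat \<Rightarrow> 'a" where
  "L u = (\<lambda>j. if j \<in> {1..n} then (\<Sum>i\<in>{1..k}. u i * cols j i) else 0)"
definition a :: nat where "a = (SOME x. x \<in> T)"
definition b :: nat where "b = (SOME y. y \<in> T \<and> y \<noteq> a)"
definition v0 :: "nat \<Rightarrow> 'a" where "v0 = (SOME v. v1 = proj_point v \<and> v \<in> vecs k \<and> v \<noteq> 0)"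

lemma Tab: "T = {a, b}" "a \<noteq> b" "a \<in> {1..k}" "b \<in> {1..k}" "a \<in> T" "b \<in> T"
proof -
  obtain x y where xy: "T = {x, y}" "x \<noteq> y" using T(2) unfolding card_2_iff by blast
  have "x \<in> T" using xy by simp
  then have aT: "a \<in> T" unfolding a_def by (rule someI)
  have "\<exists>y. y \<in> T \<and> y \<noteq> a" using xy aT by (cases "a = x") auto
  then have bT: "b \<in> T \<and> b \<noteq> a" unfolding b_def by (rule someI_ex)
  have fin: "finite T" using xy by simp
  have "{a, b} \<subseteq> T" "card {a, b} = card T" using aT bT T(2) by auto
  then have "{a, b} = T" using fin card_subset_eq by blast
  then show "T = {a, b}" "a \<noteq> b" using bT by auto
  then show "a \<in> {1..k}" "b \<in> {1..k}" "a \<in> T" "b \<in> T" using T(1) by auto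
qed

lemma v0: "v1 = proj_point v0" "v0 \<in> vecs k" "v0 \<noteq> 0" "supp v0 \<inter> T = {}" "v0 a = 0" "v0 b = 0"
proof -
  have "\<exists>v. v1 = proj_point v \<and> v \<in> vecs k \<and> v \<noteq> 0" using v1(1) by (auto simp: PG_def)
  then have h: "v1 = proj_point v0 \<and> v0 \<in> vecs k \<and> v0 \<noteq> 0" unfolding v0_def by (rule someI_ex)
  then show "v1 = proj_point v0" "v0 \<in> vecs k" "v0 \<noteq> 0" by auto
  show s: "supp v0 \<inter> T = {}" using v1(2) h psupp_pp by metis
  then show "v0 a = 0" "v0 b = 0" using Tab by (auto simp: supp_def)
qed

lemma v1mem: "w \<in> v1 \<Longrightarrow> \<exists>m. m \<noteq> 0 \<and> w = fscale m v0"
  using v0(1) by (auto simp: proj_point_def)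

lemma inX: "v \<in> vecs k \<Longrightarrow> v \<noteq> 0 \<Longrightarrow> supp v \<inter> T = {} \<Longrightarrow> proj_point v \<in> M"
proof -
  assume h: "v \<in> vecs k" "v \<noteq> 0" "supp v \<inter> T = {}"
  have "proj_point v \<in> XT k T" unfolding XT_def using h by (simp add: psupp_pp PG_intro)
  then show ?thesis unfolding M by blast
qed

lemma inZ: "v \<in> vecs k \<Longrightarrow> v \<noteq> 0 \<Longrightarrow> supp v = T \<Longrightarrow> proj_point v \<in> M"
proof -
  assume h: "v \<in> vecs k" "v \<noteq> 0" "supp v = T"
  have "proj_point v \<in> ZT k T" unfolding ZT_def using h T(2) by (simp add: psupp_pp PG_intro)
  then show ?thesis unfolding M by blast
qed

lemma inY:
  assumes "v \<in> vecs k" "v \<noteq> 0" "supp v \<inter> T = {j}"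
    and nf: "\<And>d c. d \<noteq> 0 \<Longrightarrow> c \<noteq> 0 \<Longrightarrow> v \<noteq> fscale d (v0 + fscale c (unitv j))"
  shows "proj_point v \<in> M"
proof -
  have "proj_point v \<in> YT k T {v1}"
    unfolding YT_def
  proof (intro DiffI CollectI conjI)
    show "proj_point v \<in> PG k" using assms PG_intro by blast
    show "card (psupp (proj_point v) \<inter> T) = 1" using assms by (simp add: psupp_pp)
    show "proj_point v \<notin> {proj_point (w + fscale c (unitv j')) | w j' c. (\<exists>Q\<in>{v1}. w \<in> Q) \<and> j' \<in> T \<and> c \<noteq> 0}"
    proof
      assume "proj_point v \<in> {proj_point (w + fscale c (unitv j')) | w j' c. (\<exists>Q\<in>{v1}. w \<in> Q) \<and> j' \<in> T \<and> c \<noteq> 0}"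
      then obtain w j' c where h: "proj_point v = proj_point (w + fscale c (unitv j'))" "w \<in> v1" "j' \<in> T" "c \<noteq> 0"
        by auto
      obtain e where e: "e \<noteq> 0" "v = fscale e (w + fscale c (unitv j'))" using pp_eqD[OF h(1)] by auto
      obtain m where m: "m \<noteq> 0" "w = fscale m v0" using v1mem h(2) by auto
      have "v0 j' = 0" using v0(4) h(3) by (auto simp: supp_def)
      then have "v j' \<noteq> 0" using e m h(4) by (simp add: unitv_apply)
      then have "j' = j" using assms(3) h(3) by (auto simp: supp_def)
      have "v = fscale (e * m) (v0 + fscale (c / m) (unitv j'))"
        using e m by (simp add: fscale_def fun_eq_iff algebra_simps)
      then show False using nf[of "e*m" "c/m"] e m h(4) \<open>j' = j\<close> by simp
    qed
  qed
  then show ?thesis unfolding M by auto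
qed

lemma notM: "proj_point (v0 + unitv a) \<notin> M"
proof
  let ?w = "v0 + unitv a"
  assume "proj_point ?w \<in> M"
  have sw: "psupp (proj_point ?w) = supp ?w" by (rule psupp_pp)
  have wa: "?w a = 1" using v0(5) by (simp add: unitv_apply)
  obtain l where l: "v0 l \<noteq> 0" using v0(3) by (auto simp: fun_eq_iff)
  then have "l \<notin> T" using v0(4) by (auto simp: supp_def)
  then have "l \<noteq> a" using Tab by auto
  then have wl: "?w l \<noteq> 0" using l by (simp add: unitv_apply)
  have "a \<in> psupp (proj_point ?w) \<inter> T" using wa Tab sw by (auto simp: supp_def)
  then have "proj_point ?w \<notin> XT k T" by (auto simp: XT_def)
  moreover have "proj_point ?w \<notin> ZT k T" using wl \<open>l \<notin> T\<close> by (auto simp: ZT_def sw supp_def)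
  moreover have "proj_point ?w \<notin> YT k T {v1}"
  proof -
    have "?w = v0 + fscale 1 (unitv a)" by simp
    moreover have "v0 \<in> v1" using v0(1) pp_mem by auto
    ultimately have "proj_point ?w \<in> {proj_point (v + fscale c (unitv j)) |v j c.
        (\<exists>Q\<in>{v1}. v \<in> Q) \<and> j \<in> T \<and> c \<noteq> 0}" using Tab
      by (intro CollectI exI[of _ v0] exI[of _ a] exI[of _ 1]) auto
    then show ?thesis unfolding YT_def by blast
  qed
  ultimately show False using \<open>proj_point ?w \<in> M\<close> unfolding M by auto
qed

lemma MPG: "M \<subseteq> PG k" unfolding M XT_def YT_def ZT_def by auto

lemma cols_PG: "j \<in> {1..n} \<Longrightarrow> cols j \<noteq> 0 \<and> cols j \<in> vecs k \<and> enum j = proj_point (cols j)"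
proof -
  assume j: "j \<in> {1..n}"
  then have "enum j \<in> M" using bij by (auto simp: bij_betw_def)
  then have "enum j \<in> PG k" "cols j \<in> enum j" using MPG rep by (auto simp: cols_def)
  then show ?thesis using PG_mem by blast
qed

lemma colof:
  assumes "proj_point v \<in> M"
  shows "\<exists>j\<in>{1..n}. \<exists>c. c \<noteq> 0 \<and> cols j = fscale c v"
proof -
  obtain j where j: "j \<in> {1..n}" "enum j = proj_point v" using assms bij by (auto simp: bij_betw_def)
  then have "cols j \<in> proj_point v" using rep assms by (auto simp: cols_def)
  then show ?thesis using j by (auto simp: proj_point_def)
qed

lemma L_col: "j \<in> {1..n} \<Longrightarrow> cols j = fscale c v \<Longrightarrow> L u j = c * dotk k u v"
  by (simp add: L_def dotk_def sum_distrib_left algebra_simps)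


lemma diag_indep2:
  fixes f :: "nat \<Rightarrow> nat \<Rightarrow> 'b::field"
  assumes "\<And>i. i \<in> I \<Longrightarrow> f i i \<noteq> 0" "\<And>i i'. i \<in> I \<Longrightarrow> i' \<in> I \<Longrightarrow> i' \<noteq> i \<Longrightarrow> f i' i = 0"
  shows "vs.independent (f ` I)" "inj_on f I"
proof -
  show inj: "inj_on f I"
  proof (rule inj_onI, rule ccontr)
    fix x y assume "x \<in> I" "y \<in> I" "f x = f y" "x \<noteq> y"
    then show False using assms(2)[of x y] assms(1)[of x] by metis
  qed
  show "vs.independent (f ` I)"
  proof (rule diag_indep[where idx = "inv_into I f"])
    fix bb assume "bb \<in> f ` I"
    then obtain i where i: "i \<in> I" "bb = f i" by auto
    then show "bb (inv_into I f bb) \<noteq> 0" using inj assms(1) by (simp add: inv_into_f_f)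
  next
    fix bb bb' assume "bb \<in> f ` I" "bb' \<in> f ` I" "bb' \<noteq> bb"
    then obtain i i' where i: "i \<in> I" "bb = f i" "i' \<in> I" "bb' = f i'" "i' \<noteq> i" by auto
    then show "bb' (inv_into I f bb) = 0" using inj assms(2) by (simp add: inv_into_f_f)
  qed
qed

lemma linL: "Vector_Spaces.linear fscale fscale L"
  unfolding Vector_Spaces.linear_iff using vs_fscale
  by (auto simp: L_def fun_eq_iff algebra_simps sum.distrib sum_distrib_left)

interpretation Lin: Vector_Spaces.linear fscale fscale L by (rule linL)

lemma vecs_sub: "vs.subspace (vecs k)"
  unfolding vs.subspace_def by (auto simp: vecs_def)

lemma vecs_finite: "finite (vecs k :: (nat \<Rightarrow> 'a) set)"
proof -
  have "vecs k \<subseteq> {f::nat \<Rightarrow> 'a. \<forall>x. (x \<in> {1..k} \<longrightarrow> f x \<in> UNIV) \<and> (x \<notin> {1..k} \<longrightarrow> f x = 0)}"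
    by (auto simp: vecs_def)
  then show ?thesis using finite_set_of_finite_funs[of "{1..k}" "UNIV :: 'a set" 0] finite_subset by auto
qed

lemma vecs_span: "vs.span ((unitv :: nat \<Rightarrow> nat \<Rightarrow> 'a) ` {1..k}) = vecs k"
proof
  show "vs.span ((unitv :: nat \<Rightarrow> nat \<Rightarrow> 'a) ` {1..k}) \<subseteq> vecs k"
    by (rule vs.span_minimal[OF _ vecs_sub]) (auto simp: vecs_def unitv_apply)
  show "vecs k \<subseteq> vs.span ((unitv :: nat \<Rightarrow> nat \<Rightarrow> 'a) ` {1..k})"
  proof
    fix u :: "nat \<Rightarrow> 'a" assume u: "u \<in> vecs k"
    have "u = (\<Sum>i\<in>{1..k}. fscale (u i) (unitv i))"
    proof
      fix l
      show "u l = (\<Sum>i\<in>{1..k}. fscale (u i) (unitv i)) l"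
      proof (cases "l \<in> {1..k}")
        case True
        have "(\<Sum>i\<in>{1..k}. fscale (u i) (unitv i)) l = (\<Sum>i\<in>{1..k}. u i * unitv i l)"
          by (simp add: fsum_apply)
        also have "\<dots> = u l * unitv l l" using True by (intro sum_single) (auto simp: unitv_apply)
        finally show ?thesis by (simp add: unitv_apply)
      next
        case False
        have "(\<Sum>i\<in>{1..k}. fscale (u i) (unitv i)) l = (\<Sum>i\<in>{1..k}. u i * unitv i l)"
          by (simp add: fsum_apply)
        also have "\<dots> = 0" using False by (intro sum.neutral) (auto simp: unitv_apply)
        finally show ?thesis using u False by (simp add: vecs_def)
      qed
    qed
    also have "\<dots> \<in> vs.span (unitv ` {1..k})"
      by (intro vs.span_sum vs.span_scale vs.span_base) auto
    finally show "u \<in> vs.span (unitv ` {1..k})" .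
  qed
qed

lemma unitv_indep: "vs.independent ((unitv :: nat \<Rightarrow> nat \<Rightarrow> 'a) ` {1..k})"
  by (rule diag_indep2) (auto simp: unitv_apply)

lemma e_in_M: "i \<in> {1..k} \<Longrightarrow> proj_point (unitv i :: nat \<Rightarrow> 'a) \<in> M"
proof -
  assume i: "i \<in> {1..k}"
  have "(unitv i :: nat \<Rightarrow> 'a) i = 1" by (simp add: unitv_apply)
  then have ne: "(unitv i :: nat \<Rightarrow> 'a) \<noteq> 0" by auto
  have vi: "(unitv i :: nat \<Rightarrow> 'a) \<in> vecs k" using i by (auto simp: vecs_def unitv_apply)
  have si: "supp (unitv i :: nat \<Rightarrow> 'a) = {i}" by (auto simp: supp_def unitv_apply)
  show ?thesis
  proof (cases "i \<in> T")
    case False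
    have "supp (unitv i :: nat \<Rightarrow> 'a) \<inter> T = {}" using si False by simp
    then show ?thesis by (rule inX[OF vi ne])
  next
    case True
    have s1: "supp (unitv i :: nat \<Rightarrow> 'a) \<inter> T = {i}" using si True by auto
    obtain l where l: "v0 l \<noteq> 0" using v0(3) by (auto simp: fun_eq_iff)
    then have "l \<notin> T" using v0(4) by (auto simp: supp_def)
    then have li: "l \<noteq> i" using True by auto
    have nf: "(unitv i :: nat \<Rightarrow> 'a) \<noteq> fscale d (v0 + fscale c (unitv i))"
      if dc: "d \<noteq> 0" "c \<noteq> 0" for d c
    proof
      assume "unitv i = fscale d (v0 + fscale c (unitv i))"
      then have "unitv i l = fscale d (v0 + fscale c (unitv i)) l" by (rule fun_cong)
      then have "0 = d * (v0 l + c * 0)" using li by (simp add: unitv_apply)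
      then show False using l dc by simp
    qed
    show ?thesis by (rule inY[OF vi ne s1 nf])
  qed
qed

lemma L_ker: "u \<in> vecs k \<Longrightarrow> L u = 0 \<Longrightarrow> u = 0"
proof -
  assume u: "u \<in> vecs k" "L u = 0"
  show "u = 0"
  proof
    fix i show "u i = 0 i"
    proof (cases "i \<in> {1..k}")
      case True
      obtain j c where jc: "j \<in> {1..n}" "c \<noteq> 0" "cols j = fscale c (unitv i)"
        using colof[OF e_in_M[OF True]] by auto
      have "dotk k u (unitv i) = u i" using True
        unfolding dotk_def by (subst sum_single[of _ i]) (auto simp: unitv_apply)
      then have "L u j = c * u i" using L_col[OF jc(1,3)] by simp
      then show ?thesis using u jc by simp
    next
      case False then show ?thesis using u by (simp add: vecs_def)
    qed
  qed
qed

lemma inj_L: "inj_on L (vecs k)"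
  using Lin.inj_on_iff_eq_0[OF vecs_sub] L_ker by blast

lemma dimL:
  assumes "B \<subseteq> vecs k" "vs.independent B"
  shows "vs.dim (L ` vs.span B) = card B"
proof -
  have sp: "vs.span B \<subseteq> vecs k" by (rule vs.span_minimal[OF assms(1) vecs_sub])
  have injs: "inj_on L (vs.span B)" by (rule inj_on_subset[OF inj_L sp])
  show ?thesis
  proof (rule vs.dim_unique[of "L ` B"])
    show "L ` B \<subseteq> L ` vs.span B" by (rule image_mono[OF vs.span_superset])
    show "L ` vs.span B \<subseteq> vs.span (L ` B)" by (simp add: Lin.span_image)
    show "vs.independent (L ` B)" using Lin.independent_injective_image[OF assms(2) injs] .
    show "card (L ` B) = card B" by (rule card_image[OF inj_on_subset[OF injs vs.span_superset]])
  qed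
qed

end



context S18 begin

interpretation Lin: Vector_Spaces.linear fscale fscale L by (rule linL)

lemma dotk_unitv_left: "i \<in> {1..k} \<Longrightarrow> dotk k (unitv i) x = x i"
  unfolding dotk_def by (subst sum_single[of _ i]) (auto simp: unitv_apply)

lemma dotk_unitv_right: "i \<in> {1..k} \<Longrightarrow> dotk k u (unitv i) = u i"
  unfolding dotk_def by (subst sum_single[of _ i]) (auto simp: unitv_apply)

lemma dotk_add_right: "dotk k u (x + y) = dotk k u x + dotk k u y"
  by (simp add: dotk_def algebra_simps sum.distrib)

lemma dotk_diff_left: "dotk k (x - fscale t y) p = dotk k x p - t * dotk k y p"
  by (simp add: dotk_def algebra_simps sum_subtractf sum_distrib_left)

lemma L_cols: "j \<in> {1..n} \<Longrightarrow> L u j = dotk k u (cols j)"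
  using L_col[of j 1 "cols j" u] by simp

lemma L_vecs: "L u \<in> vecs n"
  by (simp add: L_def vecs_def)

lemma C_sub: "vs.subspace (L ` vecs k)"
  by (rule Lin.subspace_image[OF vecs_sub])

lemma C_dim: "vs.dim (L ` vecs k) = k"
proof -
  have "vs.dim (L ` vs.span (unitv ` {1..k})) = card ((unitv :: nat \<Rightarrow> nat \<Rightarrow> 'a) ` {1..k})"
    by (rule dimL[OF _ unitv_indep]) (auto simp: vecs_def unitv_apply)
  also have "card ((unitv :: nat \<Rightarrow> nat \<Rightarrow> 'a) ` {1..k}) = k"
    by (simp add: card_image[OF inj_on_subset[OF unitv_inj subset_UNIV]])
  finally show ?thesis by (simp only: vecs_span)
qed

lemma Supp_sub: "B \<subseteq> vecs m \<Longrightarrow> Supp B \<subseteq> {1..m}"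
proof
  fix i assume B: "B \<subseteq> vecs m" and "i \<in> Supp B"
  then obtain x where x: "x \<in> B" "x i \<noteq> 0" by (auto simp: Supp_def supp_def)
  then have "x \<in> vecs m" using B by auto
  then show "i \<in> {1..m}" using x(2) unfolding vecs_def by blast
qed

lemma C_vecs: "L ` vecs k \<subseteq> vecs n" using L_vecs by auto

lemma Supp_C: "Supp (L ` vecs k) = {1..n}"
proof
  show "Supp (L ` vecs k) \<subseteq> {1..n}"
    by (rule Supp_sub[OF C_vecs])
  show "{1..n} \<subseteq> Supp (L ` vecs k)"
  proof
    fix j assume j: "j \<in> {1..n}"
    have c: "cols j \<noteq> 0" "cols j \<in> vecs k" using cols_PG[OF j] by auto
    then obtain i where i: "cols j i \<noteq> 0" by (auto simp: fun_eq_iff)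
    then have ik: "i \<in> {1..k}" using c(2) by (auto simp: vecs_def)
    have "L (unitv i) j = cols j i" using L_cols[OF j] dotk_unitv_left[OF ik] by simp
    moreover have "unitv i \<in> vecs k" using ik by (auto simp: vecs_def unitv_apply)
    ultimately show "j \<in> Supp (L ` vecs k)" using i unfolding Supp_def supp_def by (metis (mono_tags, lifting) UN_iff image_eqI mem_Collect_eq)
  qed
qed


lemma supp_vecs: "y \<in> vecs m \<Longrightarrow> supp y \<subseteq> {1..m}"
  unfolding vecs_def supp_def by blast

lemma dual_lower:
  assumes y: "y \<in> dual_code n (L ` vecs k)" "y \<noteq> 0"
  shows "3 \<le> card (supp y)"
proof -
  have yv: "y \<in> vecs n" and orth: "\<And>x. x \<in> L ` vecs k \<Longrightarrow> (\<Sum>j\<in>{1..n}. x j * y j) = 0"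
    using y(1) by (auto simp: dual_code_def)
  have key: "(\<Sum>j\<in>{1..n}. y j * cols j i) = 0" for i
  proof (cases "i \<in> {1..k}")
    case True
    have "unitv i \<in> vecs k" using True by (auto simp: vecs_def unitv_apply)
    then have "(\<Sum>j\<in>{1..n}. L (unitv i) j * y j) = 0" using orth by blast
    moreover have "(\<Sum>j\<in>{1..n}. L (unitv i) j * y j) = (\<Sum>j\<in>{1..n}. y j * cols j i)"
      using True by (intro sum.cong) (auto simp: L_cols dotk_unitv_left)
    ultimately show ?thesis by simp
  next
    case False
    have "cols j i = 0" if "j \<in> {1..n}" for j
      using cols_PG[OF that] False by (auto simp: vecs_def)
    then show ?thesis by simp
  qed
  have sy: "supp y \<subseteq> {1..n}" by (rule supp_vecs[OF yv])
  have fin: "finite (supp y)" using sy finite_subset by blast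
  have key2: "(\<Sum>j\<in>supp y. y j * cols j i) = 0" for i
  proof -
    have "(\<Sum>j\<in>{1..n}. y j * cols j i) = (\<Sum>j\<in>supp y. y j * cols j i)"
      by (rule sum.mono_neutral_right) (use sy in \<open>auto simp: supp_def\<close>)
    then show ?thesis using key by simp
  qed
  have c0: "card (supp y) \<noteq> 0"
  proof
    assume "card (supp y) = 0"
    then have "supp y = {}" using fin by simp
    then have "y = 0" by (auto simp: supp_def fun_eq_iff)
    then show False using y(2) by simp
  qed
  have c1: "card (supp y) \<noteq> 1"
  proof
    assume "card (supp y) = 1"
    then obtain j where j: "supp y = {j}" using card_1_singletonE by blast
    then have yj: "y j \<noteq> 0" "j \<in> {1..n}" using sy by (auto simp: supp_def)
    have "cols j i = 0" for i using key2[of i] j yj by simp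
    then have "cols j = 0" by (simp add: fun_eq_iff)
    then show False using cols_PG[OF yj(2)] by simp
  qed
  have c2: "card (supp y) \<noteq> 2"
  proof
    assume "card (supp y) = 2"
    then obtain j l where jl: "supp y = {j, l}" "j \<noteq> l" unfolding card_2_iff by blast
    then have yj: "y j \<noteq> 0" "y l \<noteq> 0" "j \<in> {1..n}" "l \<in> {1..n}" using sy by (auto simp: supp_def)
    have "y j * cols j i + y l * cols l i = 0" for i using key2[of i] jl by simp
    then have cj: "cols j = fscale (- y l / y j) (cols l)"
      using yj by (auto simp: fun_eq_iff field_simps add_eq_0_iff)
    have "- y l / y j \<noteq> 0" using yj by simp
    then have "proj_point (cols j) = proj_point (cols l)" unfolding cj by (rule pp_scale)
    then have "enum j = enum l" using cols_PG[OF yj(3)] cols_PG[OF yj(4)] by simp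
    then have "j = l" using bij yj unfolding bij_betw_def inj_on_def by blast
    then show False using jl by simp
  qed
  show ?thesis using c0 c1 c2 by linarith
qed


lemma dual_three: "\<exists>y \<in> dual_code n (L ` vecs k). y \<noteq> 0 \<and> card (supp y) = 3"
proof -
  let ?ea = "unitv a :: nat \<Rightarrow> 'a" and ?eb = "unitv b :: nat \<Rightarrow> 'a"
  let ?eab = "?ea + ?eb"
  have ab: "a \<in> {1..k}" "b \<in> {1..k}" "a \<noteq> b" "T = {a, b}" using Tab by auto
  have "?eab \<in> vecs k" using ab by (auto simp: vecs_def unitv_apply)
  moreover have e1: "?eab a = 1" using ab by (simp add: unitv_apply)
  have "?eab \<noteq> 0"
  proof
    assume "?eab = 0"
    then have "?eab a = 0" by (simp only: zero_fun_apply)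
    then show False using e1 by simp
  qed
  moreover have "supp ?eab = T" using ab by (auto simp: supp_def unitv_apply)
  ultimately have "proj_point ?eab \<in> M" by (rule inZ)
  then obtain j3 c3 where j3: "j3 \<in> {1..n}" "c3 \<noteq> 0" "cols j3 = fscale c3 ?eab"
    using colof by blast
  obtain j1 c1 where j1: "j1 \<in> {1..n}" "c1 \<noteq> 0" "cols j1 = fscale c1 ?ea"
    using colof[OF e_in_M[OF ab(1)]] by blast
  obtain j2 c2 where j2: "j2 \<in> {1..n}" "c2 \<noteq> 0" "cols j2 = fscale c2 ?eb"
    using colof[OF e_in_M[OF ab(2)]] by blast
  have d12: "j1 \<noteq> j2"
  proof
    assume "j1 = j2"
    then have "fscale c1 ?ea a = fscale c2 ?eb a" using j1 j2 by simp
    then show False using ab j1 by (simp add: unitv_apply)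
  qed
  have d13: "j1 \<noteq> j3"
  proof
    assume "j1 = j3"
    then have "fscale c1 ?ea b = fscale c3 ?eab b" using j1 j3 by simp
    then show False using ab j3 by (simp add: unitv_apply)
  qed
  have d23: "j2 \<noteq> j3"
  proof
    assume "j2 = j3"
    then have "fscale c2 ?eb a = fscale c3 ?eab a" using j2 j3 by simp
    then show False using ab j3 by (simp add: unitv_apply)
  qed
  define y where "y j = (if j = j1 then 1 / c1 else if j = j2 then 1 / c2 else if j = j3 then - 1 / c3 else 0)" for j
  have sy: "supp y = {j1, j2, j3}"
    using d12 d13 d23 j1 j2 j3 by (auto simp: supp_def y_def)
  have yv: "y \<in> vecs n" using j1 j2 j3 unfolding vecs_def y_def by auto
  have y0: "y \<noteq> 0" using sy by (auto simp: supp_def)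
  have "card (supp y) = 3" using sy d12 d13 d23 by simp
  moreover have "y \<in> dual_code n (L ` vecs k)"
    unfolding dual_code_def
  proof (intro CollectI conjI ballI yv)
    fix x assume "x \<in> L ` vecs k"
    then obtain u where x: "x = L u" by auto
    have "(\<Sum>j\<in>{1..n}. x j * y j) = (\<Sum>j\<in>{j1, j2, j3}. x j * y j)"
      by (rule sum.mono_neutral_right) (use j1 j2 j3 in \<open>auto simp: y_def\<close>)
    also have "\<dots> = x j1 * y j1 + x j2 * y j2 + x j3 * y j3" using d12 d13 d23 by simp
    finally have sx: "(\<Sum>j\<in>{1..n}. x j * y j) = x j1 * y j1 + x j2 * y j2 + x j3 * y j3" .
    have "x j1 = c1 * dotk k u ?ea" using L_col[OF j1(1,3)] x by simp
    then have x1: "x j1 = c1 * u a" by (simp only: dotk_unitv_right[OF ab(1)])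
    have "x j2 = c2 * dotk k u ?eb" using L_col[OF j2(1,3)] x by simp
    then have x2: "x j2 = c2 * u b" by (simp only: dotk_unitv_right[OF ab(2)])
    have "x j3 = c3 * dotk k u ?eab" using L_col[OF j3(1,3)] x by simp
    then have x3: "x j3 = c3 * (u a + u b)"
      by (simp only: dotk_add_right dotk_unitv_right[OF ab(1)] dotk_unitv_right[OF ab(2)])
    show "(\<Sum>j\<in>{1..n}. x j * y j) = 0"
      unfolding sx x1 x2 x3 using d12 d13 d23 j1 j2 j3 by (simp add: y_def field_simps)
  qed
  ultimately show ?thesis using y0 by blast
qed

lemma min_dist3: "min_dist (dual_code n (L ` vecs k)) = 3"
  unfolding min_dist_def
proof (rule cInf_eq_minimum)
  show "3 \<in> {card (supp x) |x. x \<in> dual_code n (L ` vecs k) \<and> x \<noteq> 0}"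
    using dual_three by force
  fix m assume "m \<in> {card (supp x) |x. x \<in> dual_code n (L ` vecs k) \<and> x \<noteq> 0}"
  then show "3 \<le> m" using dual_lower by blast
qed


lemma D0_exists: "\<exists>D. vs.subspace D \<and> D \<subseteq> L ` vecs k \<and> vs.dim D = k - 1 \<and> Supp D = {1..n}"
proof -
  define w0 where "w0 = v0 + unitv a"
  have ak: "a \<in> {1..k}" using Tab by auto
  have w0a: "w0 a = 1" using v0(5) by (simp add: w0_def unitv_apply)
  have w0v: "w0 \<in> vecs k" using v0(2) ak by (auto simp: w0_def vecs_def unitv_apply)
  define f where "f i = unitv i - fscale (w0 i) (unitv a)" for i
  define I where "I = {1..k} - {a}"
  have fi: "f i i \<noteq> 0" if "i \<in> I" for i using that by (simp add: f_def I_def unitv_apply)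
  have fi': "f i' i = 0" if "i \<in> I" "i' \<in> I" "i' \<noteq> i" for i i'
    using that by (simp add: f_def I_def unitv_apply)
  have ind: "vs.independent (f ` I)" and inj: "inj_on f I"
    using diag_indep2[of I f, OF fi fi'] by auto
  have Fv: "f ` I \<subseteq> vecs k" using ak by (auto simp: f_def I_def vecs_def unitv_apply)
  have spv: "vs.span (f ` I) \<subseteq> vecs k" by (rule vs.span_minimal[OF Fv vecs_sub])
  let ?D = "L ` vs.span (f ` I)"
  have "vs.dim ?D = card (f ` I)" by (rule dimL[OF Fv ind])
  also have "\<dots> = card I" by (rule card_image[OF inj])
  also have "card I = k - 1" using ak by (simp add: I_def)
  finally have dimD: "vs.dim ?D = k - 1" .
  have subD: "vs.subspace ?D" by (rule Lin.subspace_image[OF vs.subspace_span])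
  have DC: "?D \<subseteq> L ` vecs k" using spv by auto
  have "Supp ?D = {1..n}"
  proof
    show "Supp ?D \<subseteq> {1..n}" using DC C_vecs by (intro Supp_sub) auto
    show "{1..n} \<subseteq> Supp ?D"
    proof
      fix j assume j: "j \<in> {1..n}"
      let ?p = "cols j"
      have pc: "?p \<noteq> 0" "?p \<in> vecs k" "enum j = proj_point ?p" using cols_PG[OF j] by auto
      have "enum j \<in> M" using j bij by (auto simp: bij_betw_def)
      have "\<exists>i\<in>{1..k}. ?p i \<noteq> w0 i * ?p a"
      proof (rule ccontr)
        assume "\<not> ?thesis"
        then have h: "\<And>i. i \<in> {1..k} \<Longrightarrow> ?p i = w0 i * ?p a" by auto
        have pe: "?p = fscale (?p a) w0"
        proof
          fix i show "?p i = fscale (?p a) w0 i"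
          proof (cases "i \<in> {1..k}")
            case True then show ?thesis using h by (simp add: mult.commute)
          next
            case False then show ?thesis using pc(2) w0v by (simp add: vecs_def)
          qed
        qed
        have "?p a \<noteq> 0"
        proof
          assume "?p a = 0"
          then have "?p = fscale 0 w0" using pe by simp
          then show False using pc(1) by (simp add: fscale_def fun_eq_iff)
        qed
        then have "proj_point ?p = proj_point w0" using pe pp_scale by metis
        then show False using notM \<open>enum j \<in> M\<close> pc(3) by (simp add: w0_def)
      qed
      then obtain i where i: "i \<in> {1..k}" "?p i \<noteq> w0 i * ?p a" by blast
      have ia: "i \<noteq> a" using i w0a by auto
      have "L (f i) j = dotk k (f i) ?p" by (rule L_cols[OF j])
      also have "\<dots> = ?p i - w0 i * ?p a"
        unfolding f_def dotk_diff_left dotk_unitv_left[OF i(1)] dotk_unitv_left[OF ak] ..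
      finally have "L (f i) j \<noteq> 0" using i by simp
      moreover have "f i \<in> vs.span (f ` I)" using i ia by (intro vs.span_base) (auto simp: I_def)
      ultimately show "j \<in> Supp ?D" unfolding Supp_def supp_def by blast
    qed
  qed
  then show ?thesis using subD DC dimD by blast
qed


lemma Tmem: "x \<in> T \<longleftrightarrow> x = a \<or> x = b" using Tab(1) by blast

lemma supp_T0: "z a = 0 \<Longrightarrow> z b = 0 \<Longrightarrow> supp z \<inter> T = {}"
  by (auto simp: supp_def Tmem)

lemma supp_Tb: "z a = 0 \<Longrightarrow> z b \<noteq> 0 \<Longrightarrow> supp z \<inter> T = {b}"
  by (auto simp: supp_def Tmem)

lemma supp_Ta: "z a \<noteq> 0 \<Longrightarrow> z b = 0 \<Longrightarrow> supp z \<inter> T = {a}"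
  by (auto simp: supp_def Tmem)

lemma line_M:
  assumes xv: "x \<in> vecs k" and yv: "y \<in> vecs k"
    and ind: "\<And>\<alpha> \<beta>. (\<forall>i. \<alpha> * x i + \<beta> * y i = 0) \<Longrightarrow> \<alpha> = 0 \<and> \<beta> = 0"
  shows "\<exists>\<alpha> \<beta>. (\<lambda>i. \<alpha> * x i + \<beta> * y i) \<noteq> 0 \<and> proj_point (\<lambda>i. \<alpha> * x i + \<beta> * y i) \<in> M"
proof -
  define lin where "lin \<alpha> \<beta> = (\<lambda>i. \<alpha> * x i + \<beta> * y i)" for \<alpha> \<beta>
  have linv: "lin \<alpha> \<beta> \<in> vecs k" for \<alpha> \<beta> using xv yv by (simp add: lin_def vecs_def)
  have linnz: "lin \<alpha> \<beta> \<noteq> 0" if "\<alpha> \<noteq> 0 \<or> \<beta> \<noteq> 0" for \<alpha> \<beta>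
  proof
    assume "lin \<alpha> \<beta> = 0"
    then have "\<forall>i. \<alpha> * x i + \<beta> * y i = 0" by (simp add: lin_def fun_eq_iff)
    then show False using ind that by blast
  qed
  have zer: "\<exists>\<alpha> \<beta>. (\<alpha> \<noteq> 0 \<or> \<beta> \<noteq> 0) \<and> lin \<alpha> \<beta> l = 0" for l
  proof (cases "x l = 0")
    case True then show ?thesis by (intro exI[of _ 1] exI[of _ 0]) (simp add: lin_def)
  next
    case False then show ?thesis
      by (intro exI[of _ "- y l"] exI[of _ "x l"]) (simp add: lin_def algebra_simps)
  qed
  obtain \<alpha>1 \<beta>1 where ab1: "\<alpha>1 \<noteq> 0 \<or> \<beta>1 \<noteq> 0" "lin \<alpha>1 \<beta>1 a = 0" using zer by blast
  obtain \<alpha>2 \<beta>2 where ab2: "\<alpha>2 \<noteq> 0 \<or> \<beta>2 \<noteq> 0" "lin \<alpha>2 \<beta>2 b = 0" using zer by blast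
  define z where "z = lin \<alpha>1 \<beta>1"
  define z' where "z' = lin \<alpha>2 \<beta>2"
  have zv: "z \<in> vecs k" "z \<noteq> 0" using linv linnz ab1 by (auto simp: z_def)
  have zv': "z' \<in> vecs k" "z' \<noteq> 0" using linv linnz ab2 by (auto simp: z'_def)
  have Tab': "T = {a, b}" "a \<noteq> b" using Tab by auto
  have "\<exists>\<alpha> \<beta>. lin \<alpha> \<beta> \<noteq> 0 \<and> proj_point (lin \<alpha> \<beta>) \<in> M"
  proof (cases "z b = 0")
    case True
    have "supp z \<inter> T = {}" using True ab1(2) by (intro supp_T0) (simp_all add: z_def)
    then have "proj_point z \<in> M" by (rule inX[OF zv])
    then show ?thesis using zv unfolding z_def by blast
  next
    case zb: False
    show ?thesis
    proof (cases "z' a = 0")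
      case True
      have "supp z' \<inter> T = {}" using True ab2(2) by (intro supp_T0) (simp_all add: z'_def)
      then have "proj_point z' \<in> M" by (rule inX[OF zv'])
      then show ?thesis using zv' unfolding z'_def by blast
    next
      case za: False
      have sz: "supp z \<inter> T = {b}" using zb ab1(2) by (intro supp_Tb) (simp_all add: z_def)
      have sz': "supp z' \<inter> T = {a}" using za ab2(2) by (intro supp_Ta) (simp_all add: z'_def)
      show ?thesis
      proof (cases "\<forall>d c. d \<noteq> 0 \<longrightarrow> c \<noteq> 0 \<longrightarrow> z \<noteq> fscale d (v0 + fscale c (unitv b))")
        case True
        then have "proj_point z \<in> M" using inY[OF zv sz] by blast
        then show ?thesis using zv unfolding z_def by blast
      next
        case False
        then obtain d c where dc: "d \<noteq> 0" "c \<noteq> 0" "z = fscale d (v0 + fscale c (unitv b))" by blast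
        show ?thesis
        proof (cases "\<forall>d c. d \<noteq> 0 \<longrightarrow> c \<noteq> 0 \<longrightarrow> z' \<noteq> fscale d (v0 + fscale c (unitv a))")
          case True
          then have "proj_point z' \<in> M" using inY[OF zv' sz'] by blast
          then show ?thesis using zv' unfolding z'_def by blast
        next
          case False
          then obtain d' c' where dc': "d' \<noteq> 0" "c' \<noteq> 0" "z' = fscale d' (v0 + fscale c' (unitv a))" by blast
          let ?\<alpha> = "\<alpha>1 / d - \<alpha>2 / d'" and ?\<beta> = "\<beta>1 / d - \<beta>2 / d'"
          have ue: "lin ?\<alpha> ?\<beta> = (\<lambda>i. c * unitv b i - c' * unitv a i)"
          proof
            fix i
            have e1: "\<alpha>1 * x i + \<beta>1 * y i = d * (v0 i + c * unitv b i)"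
              using fun_cong[OF dc(3), of i] by (simp add: z_def lin_def)
            have e2: "\<alpha>2 * x i + \<beta>2 * y i = d' * (v0 i + c' * unitv a i)"
              using fun_cong[OF dc'(3), of i] by (simp add: z'_def lin_def)
            have "lin ?\<alpha> ?\<beta> i = (\<alpha>1 * x i + \<beta>1 * y i) / d - (\<alpha>2 * x i + \<beta>2 * y i) / d'"
              using dc(1) dc'(1) by (simp add: lin_def field_simps)
            also have "\<dots> = c * unitv b i - c' * unitv a i"
              unfolding e1 e2 using dc(1) dc'(1) by simp
            finally show "lin ?\<alpha> ?\<beta> i = c * unitv b i - c' * unitv a i" .
          qed
          have ub: "lin ?\<alpha> ?\<beta> b = c" using ue Tab' by (simp add: unitv_apply)
          have nz: "lin ?\<alpha> ?\<beta> \<noteq> 0"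
          proof
            assume "lin ?\<alpha> ?\<beta> = 0"
            then have "lin ?\<alpha> ?\<beta> b = 0" by (simp only: zero_fun_apply)
            then show False using ub dc(2) by simp
          qed
          have "supp (lin ?\<alpha> ?\<beta>) = T"
            unfolding ue using Tab'(2) dc(2) dc'(2) by (auto simp: supp_def unitv_apply Tmem)
          then have "proj_point (lin ?\<alpha> ?\<beta>) \<in> M" by (rule inZ[OF linv nz])
          then show ?thesis using nz by blast
        qed
      qed
    qed
  qed
  then show ?thesis unfolding lin_def .
qed


lemma dotk_lin2: "dotk k s (\<lambda>i. \<alpha> * x i + \<beta> * y i) = \<alpha> * dotk k s x + \<beta> * dotk k s y"
  by (simp add: dotk_def algebra_simps sum.distrib sum_distrib_left)

lemma D_lower:
  assumes D: "vs.subspace D" "D \<subseteq> L ` vecs k" "Supp D = {1..n}" "0 < vs.dim D"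
  shows "k - 1 \<le> vs.dim D"
proof (rule ccontr)
  assume "\<not> k - 1 \<le> vs.dim D"
  then have small: "vs.dim D + 2 \<le> k" using k3 by linarith
  obtain B where B: "B \<subseteq> D" "vs.independent B" "D \<subseteq> vs.span B" "card B = vs.dim D"
    by (rule vs.basis_exists)
  have finB: "finite B"
  proof (rule ccontr)
    assume "infinite B"
    then have "card B = 0" by simp
    then show False using B(4) D(4) by simp
  qed
  define pre where "pre b = (SOME u. u \<in> vecs k \<and> L u = b)" for b
  have pre: "pre b \<in> vecs k \<and> L (pre b) = b" if "b \<in> B" for b
  proof -
    have "\<exists>u. u \<in> vecs k \<and> L u = b" using that B(1) D(2) by blast
    then show ?thesis unfolding pre_def by (rule someI_ex)
  qed
  let ?S = "pre ` B"
  have finS: "finite ?S" using finB by simp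
  have cS: "card ?S \<le> card B" using finB by (rule card_image_le)
  then have "card ?S \<le> k" using B(4) small by linarith
  then have "\<exists>F. finite F \<and> F \<subseteq> vecs k \<and> card F = k - card ?S \<and> indepP F \<and> (\<forall>x\<in>F. \<forall>s\<in>?S. dotk k s x = 0)"
    by (rule elim[OF finS])
  then obtain F where F0: "finite F \<and> F \<subseteq> vecs k \<and> card F = k - card ?S \<and> indepP F \<and> (\<forall>x\<in>F. \<forall>s\<in>?S. dotk k s x = 0)" ..
  then have F: "finite F" "F \<subseteq> vecs k" "card F = k - card ?S" "indepP F"
    "\<forall>x\<in>F. \<forall>s\<in>?S. dotk k s x = 0" using F0 by simp_all
  have "2 \<le> card F" using F(3) cS B(4) small by linarith
  then have "card F \<noteq> 0" by linarith
  then have "F \<noteq> {}" by (metis card.empty)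
  then obtain x where x: "x \<in> F" by blast
  have "card (F - {x}) = card F - 1" using x F(1) by (simp add: card_Diff_singleton)
  then have "card (F - {x}) \<noteq> 0" using \<open>2 \<le> card F\<close> by linarith
  then have "F - {x} \<noteq> {}" by (metis card.empty)
  then obtain y where y: "y \<in> F - {x}" by blast
  have xy: "x \<noteq> y" "y \<in> F" using y by auto
  have ind2: "\<alpha> = 0 \<and> \<beta> = 0" if h: "\<forall>i. \<alpha> * x i + \<beta> * y i = 0" for \<alpha> \<beta>
  proof -
    define c where "c z = (if z = x then \<alpha> else if z = y then \<beta> else 0)" for z
    have "\<forall>i. (\<Sum>z\<in>F. c z * z i) = 0"
    proof
      fix i
      have "(\<Sum>z\<in>F. c z * z i) = (\<Sum>z\<in>{x, y}. c z * z i)"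
        by (rule sum.mono_neutral_right) (use F(1) x xy in \<open>auto simp: c_def\<close>)
      also have "\<dots> = \<alpha> * x i + \<beta> * y i" using xy by (simp add: c_def)
      finally show "(\<Sum>z\<in>F. c z * z i) = 0" using h by simp
    qed
    then have "c x = 0" "c y = 0" using F(4) x xy unfolding indepP_def by blast+
    then show ?thesis using xy by (simp add: c_def)
  qed
  obtain \<alpha> \<beta> where ab: "(\<lambda>i. \<alpha> * x i + \<beta> * y i) \<noteq> 0" "proj_point (\<lambda>i. \<alpha> * x i + \<beta> * y i) \<in> M"
    using line_M[of x y] F(2) x xy ind2 by blast
  obtain j c where j: "j \<in> {1..n}" "c \<noteq> 0" "cols j = fscale c (\<lambda>i. \<alpha> * x i + \<beta> * y i)"
    using colof[OF ab(2)] by blast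
  have bj: "bb j = 0" if "bb \<in> B" for bb
  proof -
    have "pre bb \<in> ?S" using that by blast
    then have "dotk k (pre bb) x = 0" "dotk k (pre bb) y = 0" using F(5) x xy by auto
    then have "dotk k (pre bb) (\<lambda>i. \<alpha> * x i + \<beta> * y i) = 0" by (simp add: dotk_lin2)
    moreover have "bb j = L (pre bb) j" using pre[OF that] by simp
    ultimately show ?thesis using L_col[OF j(1) j(3)] by simp
  qed
  have subj: "vs.subspace {d. d j = 0}" unfolding vs.subspace_def by simp
  have spj: "d j = 0" if "d \<in> vs.span B" for d
    by (rule vs.span_induct[where P="\<lambda>d. d j = 0", OF that subj]) (rule bj)
  have "j \<in> Supp D" using D(3) j(1) by simp
  then obtain d where "d \<in> D" "d j \<noteq> 0" by (auto simp: Supp_def supp_def)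
  then show False using spj B(3) by blast
qed

end


theorem mainTheorem18:
  fixes k n :: nat and T :: "nat set"
    and v1 :: "(nat \<Rightarrow> 'a::{field,finite}) set"
    and M :: "(nat \<Rightarrow> 'a) set set"
    and enum :: "nat \<Rightarrow> (nat \<Rightarrow> 'a) set"
    and rep :: "(nat \<Rightarrow> 'a) set \<Rightarrow> (nat \<Rightarrow> 'a)"
    and C :: "(nat \<Rightarrow> 'a) set"
  assumes "k \<ge> 3"
    and "T \<subseteq> {1..k}" and "card T = 2"
    and "v1 \<in> PG k" and "psupp v1 \<inter> T = {}"
    and "M = XT k T \<union> YT k T {v1} \<union> ZT k T"
    and "n = card M"
    and "bij_betw enum {1..n} M"
    and "\<forall>P\<in>M. rep P \<in> P"
    and "C = gen_code k n (\<lambda>j. rep (enum j))"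
  shows "fsubspace C \<and> C \<subseteq> vecs n \<and> fdim C = k
    \<and> min_dist (dual_code n C) = 3
    \<and> covdim n C = enat (k - 1)
    \<and> covdim n C = enat (k - min_dist (dual_code n C) + 2)"
proof -
  interpret S: S18 k n T v1 M enum rep
    using assms(1-6,8,9) by unfold_locales auto
  have Ceq: "C = S.L ` vecs k"
    unfolding assms(10) gen_code_def S.L_def S.cols_def by auto
  have c1: "fsubspace C" unfolding Ceq by (rule S.C_sub)
  have c2: "C \<subseteq> vecs n" unfolding Ceq by (rule S.C_vecs)
  have c3: "fdim C = k" unfolding Ceq by (rule S.C_dim)
  have c4: "min_dist (dual_code n C) = 3" unfolding Ceq by (rule S.min_dist3)
  have le: "(LEAST r. r > 0 \<and> (\<exists>D. fsubspace D \<and> D \<subseteq> C \<and> fdim D = r \<and> Supp D = {1..n})) = k - 1"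
  proof (rule Least_equality)
    show "k - 1 > 0 \<and> (\<exists>D. fsubspace D \<and> D \<subseteq> C \<and> fdim D = k - 1 \<and> Supp D = {1..n})"
      using S.D0_exists assms(1) unfolding Ceq by auto
    fix r assume "r > 0 \<and> (\<exists>D. fsubspace D \<and> D \<subseteq> C \<and> fdim D = r \<and> Supp D = {1..n})"
    then obtain D where "r > 0" "fsubspace D" "D \<subseteq> C" "fdim D = r" "Supp D = {1..n}" by blast
    then show "k - 1 \<le> r" using S.D_lower[of D] unfolding Ceq by auto
  qed
  have c5: "covdim n C = enat (k - 1)"
    unfolding covdim_def le using S.Supp_C Ceq by simp
  have c6: "covdim n C = enat (k - min_dist (dual_code n C) + 2)"
    using c5 c4 assms(1) by simp
  show ?thesis using c1 c2 c3 c4 c5 c6 by blast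
qed

end
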